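(* Let $m_1,m_2,n_1\in\mathbb Z_+$. Then $$|\mathcal S(m_1,m_2,n_1)|=|\mathcal S(m_1-1,m_2,n_1-1)|+|{}^1\mathcal S(m_1+1,m_2-1,n_1-1)|+|{}^2\mathcal S(m_1-1,m_2,n_1-1)|+|{}^3\mathcal S(m_1,m_2,n_1)|,$$ where $|{}^1\mathcal S|:=|R^1|+|R^2|$, $|{}^2\mathcal S|:=|Q^1|+|Q^2|$, $|{}^3\mathcal S|:=|U^1|+|U^2|$ (all evaluated at the same parameters).
   Context: (Type $G_2$ with $\mu(h_2)=0$: here $m_i=\lambda(h_i)$, $n_1=\mu(h_1)$, and $\mathcal S(m_1,m_2,n_1)$ is the lattice point set $\mathcal S^G_{\lambda,\mu}$ of the paper's polytope with $n_2=0$.) For arbitrary integers $m_1,m_2,n_1$ define: $\mathcal S(m_1,m_2,n_1)=\{(a,b,c,d,e,f)\in\mathbb Z_+^6: a\le\min\{m_1,n_1\},\ b\le m_2,\ f\le\min\{m_2,0\},\ b+e-a\le m_2,\ a+c+d\le\min\{m_1+m_2,n_1\},\ a+b+c\le\min\{m_1+m_2,n_1\},\ a+b+c+d\le\min\{m_1+2m_2,n_1\},\ b+c+d+e\le\min\{m_1+2m_2,n_1\},\ 2(a+c)+3d-b\le m_1+n_1,\ 2(a+c)+b+d\le m_1+n_1\}$; $R^1(m_1,m_2,n_1)=\{(b,c,d,e)\in\mathbb Z_+^4: b+e\le m_2,\ c+d\le m_1+m_2,\ b+c\le m_1+m_2,\ b+c+d+e\le n_1,\ 2c+3d-b\le m_1+n_1,\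 b+2c+d\le m_1+n_1\}$; $R^2(m_1,m_2,n_1)=\{(a,b,c,d)\in\mathbb Z_+^4: a<m_1,\ b\le m_2,\ a+c+d<m_1+m_2,\ a+b+c<m_1+m_2,\ a+b+c+d<n_1,\ 2a+2c+3d-b<m_1+n_1-1,\ 2a+b+2c+d<m_1+n_1-1\}$; $Q^1(m_1,m_2,n_1)=\{(a,c,d)\in\mathbb Z_+^3: a\le m_1,\ a+c+d\le\min\{m_1+m_2,n_1\},\ 2(a+c)+3d\le m_1+n_1\}$; $Q^2(m_1,m_2,n_1)=\{(a,b,c)\in\mathbb Z_+^3: a\le m_1,\ a+b+c\le\min\{m_1+m_2-1,n_1-1\},\ b\le m_2-1,\ 2(a+c)+b\le m_1+n_1-1\}$; $U^1(m_1,m_2,n_1)=\{(c,d)\in\mathbb Z_+^2: c+d\le\min\{m_1+m_2,n_1\},\ 2c+3d\le m_1+n_1\}$; $U^2(m_1,m_2,n_1)=\{(b,c)\in\mathbb Z_+^2: b+c<\min\{m_1+m_2,n_1\},\ b<m_2,\ 2c+b<m_1+n_1\}$. *)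

theory Defs
  imports Main
begin

text \<open>Lattice point sets; Z_+ means nonnegative integers. Parameters are arbitrary integers.\<close>

definition S_set :: "int \<Rightarrow> int \<Rightarrow> int \<Rightarrow> (int \<times> int \<times> int \<times> int \<times> int \<times> int) set" where
  "S_set m1 m2 n1 = {(a,b,c,d,e,f). 0 \<le> a \<and> 0 \<le> b \<and> 0 \<le> c \<and> 0 \<le> d \<and> 0 \<le> e \<and> 0 \<le> f \<and>
     a \<le> min m1 n1 \<and> b \<le> m2 \<and> f \<le> min m2 0 \<and> b + e - a \<le> m2 \<and>
     a + c + d \<le> min (m1 + m2) n1 \<and> a + b + c \<le> min (m1 + m2) n1 \<and>
     a + b + c + d \<le> min (m1 + 2*m2) n1 \<and> b + c + d + e \<le> min (m1 + 2*m2) n1 \<and>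
     2*(a + c) + 3*d - b \<le> m1 + n1 \<and> 2*(a + c) + b + d \<le> m1 + n1}"

definition R1_set :: "int \<Rightarrow> int \<Rightarrow> int \<Rightarrow> (int \<times> int \<times> int \<times> int) set" where
  "R1_set m1 m2 n1 = {(b,c,d,e). 0 \<le> b \<and> 0 \<le> c \<and> 0 \<le> d \<and> 0 \<le> e \<and>
     b + e \<le> m2 \<and> c + d \<le> m1 + m2 \<and> b + c \<le> m1 + m2 \<and> b + c + d + e \<le> n1 \<and>
     2*c + 3*d - b \<le> m1 + n1 \<and> b + 2*c + d \<le> m1 + n1}"

definition R2_set :: "int \<Rightarrow> int \<Rightarrow> int \<Rightarrow> (int \<times> int \<times> int \<times> int) set" where
  "R2_set m1 m2 n1 = {(a,b,c,d). 0 \<le> a \<and> 0 \<le> b \<and> 0 \<le> c \<and> 0 \<le> d \<and>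
     a < m1 \<and> b \<le> m2 \<and> a + c + d < m1 + m2 \<and> a + b + c < m1 + m2 \<and> a + b + c + d < n1 \<and>
     2*a + 2*c + 3*d - b < m1 + n1 - 1 \<and> 2*a + b + 2*c + d < m1 + n1 - 1}"

definition Q1_set :: "int \<Rightarrow> int \<Rightarrow> int \<Rightarrow> (int \<times> int \<times> int) set" where
  "Q1_set m1 m2 n1 = {(a,c,d). 0 \<le> a \<and> 0 \<le> c \<and> 0 \<le> d \<and>
     a \<le> m1 \<and> a + c + d \<le> min (m1 + m2) n1 \<and> 2*(a + c) + 3*d \<le> m1 + n1}"

definition Q2_set :: "int \<Rightarrow> int \<Rightarrow> int \<Rightarrow> (int \<times> int \<times> int) set" where
  "Q2_set m1 m2 n1 = {(a,b,c). 0 \<le> a \<and> 0 \<le> b \<and> 0 \<le> c \<and>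
     a \<le> m1 \<and> a + b + c \<le> min (m1 + m2 - 1) (n1 - 1) \<and> b \<le> m2 - 1 \<and> 2*(a + c) + b \<le> m1 + n1 - 1}"

definition U1_set :: "int \<Rightarrow> int \<Rightarrow> int \<Rightarrow> (int \<times> int) set" where
  "U1_set m1 m2 n1 = {(c,d). 0 \<le> c \<and> 0 \<le> d \<and>
     c + d \<le> min (m1 + m2) n1 \<and> 2*c + 3*d \<le> m1 + n1}"

definition U2_set :: "int \<Rightarrow> int \<Rightarrow> int \<Rightarrow> (int \<times> int) set" where
  "U2_set m1 m2 n1 = {(b,c). 0 \<le> b \<and> 0 \<le> c \<and>
     b + c < min (m1 + m2) n1 \<and> b < m2 \<and> 2*c + b < m1 + n1}"

end

theory Submission
  imports Defs
begin

definition S4_set :: "int \<Rightarrow> int \<Rightarrow> int \<Rightarrow> (int \<times> int \<times> int \<times> int) set" where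
  "S4_set m1 m2 n1 = {(a,b,c,d). 0 \<le> a \<and> 0 \<le> b \<and> 0 \<le> c \<and> 0 \<le> d \<and>
     a \<le> min m1 n1 \<and> b \<le> m2 \<and>
     a + c + d \<le> min (m1 + m2) n1 \<and> a + b + c \<le> min (m1 + m2) n1 \<and>
     a + b + c + d \<le> min (m1 + 2*m2) n1 \<and>
     2*(a + c) + 3*d - b \<le> m1 + n1 \<and> 2*(a + c) + b + d \<le> m1 + n1}"

lemma fin_S: "finite (S_set m1 m2 n1)"
proof -
  have "S_set m1 m2 n1 \<subseteq> {0..n1} \<times> {0..m2} \<times> {0..n1} \<times> {0..n1} \<times> {0..n1} \<times> {0..0}"
    unfolding S_set_def by auto
  then show ?thesis by (rule finite_subset) auto
qed

lemma fin_S4: "finite (S4_set m1 m2 n1)"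
proof -
  have "S4_set m1 m2 n1 \<subseteq> {0..n1} \<times> {0..m2} \<times> {0..n1} \<times> {0..n1}"
    unfolding S4_set_def by auto
  then show ?thesis by (rule finite_subset) auto
qed

lemma split_card: "finite X \<Longrightarrow> card X = card {x\<in>X. P x} + card {x\<in>X. \<not> P x}"
proof -
  assume f: "finite X"
  have "X = {x\<in>X. P x} \<union> {x\<in>X. \<not> P x}" by auto
  moreover have "card ({x\<in>X. P x} \<union> {x\<in>X. \<not> P x}) = card {x\<in>X. P x} + card {x\<in>X. \<not> P x}"
    by (rule card_Un_disjoint) (use f in auto)
  ultimately show ?thesis by simp
qed

lemma part1:
  fixes m1 m2 n1 :: int
  assumes "0 \<le> m2" "0 \<le> m1"
  shows "card (S_set m1 m2 n1) = card (S_set (m1 - 1) m2 (n1 - 1)) + card (R1_set (m1 + 1) (m2 - 1) (n1 - 1)) + card (S4_set m1 m2 n1)"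
proof -
  define M where "M = min (m1 + 2*m2) n1"
  let ?S = "S_set m1 m2 n1"
  let ?P = "\<lambda>(a::int,b::int,c::int,d::int,e::int,f::int). b + e - a \<le> m2 - 1 \<and> b + c + d + e \<le> M - 1"
  let ?A = "{x\<in>{x\<in>?S. ?P x}. (\<lambda>(a,b,c,d,e,f). 1 \<le> a) x}"
  let ?B = "{x\<in>{x\<in>?S. ?P x}. \<not> (\<lambda>(a,b,c,d,e,f). 1 \<le> a) x}"
  let ?C = "{x\<in>?S. \<not> ?P x}"
  have c1: "card ?S = card ?A + card ?B + card ?C"
    using split_card[OF fin_S[of m1 m2 n1], where P="?P"]
      split_card[OF finite_subset[OF _ fin_S[of m1 m2 n1]], where X="{x\<in>?S. ?P x}" and P="\<lambda>(a,b,c,d,e,f). 1 \<le> a"]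
    by auto
  have cA: "card (S_set (m1 - 1) m2 (n1 - 1)) = card ?A"
    by (rule bij_betw_same_card[OF bij_betw_byWitness[where f="\<lambda>(a,b,c,d,e,f). (a+1,b,c,d,e,f)"
         and f'="\<lambda>(a,b,c,d,e,f). (a-1,b,c,d,e,f)"]])
       (auto simp: S_set_def M_def)
  have cB: "card (R1_set (m1 + 1) (m2 - 1) (n1 - 1)) = card ?B"
    by (rule bij_betw_same_card[OF bij_betw_byWitness[where f="\<lambda>(b,c,d,e). (0,b,c,d,e,0)"
         and f'="\<lambda>(a,b,c,d,e,f). (b,c,d,e)"]])
       (use assms in \<open>auto simp: S_set_def R1_set_def M_def\<close>)
  have cC: "card (S4_set m1 m2 n1) = card ?C"
    by (rule bij_betw_same_card[OF bij_betw_byWitness[where f="\<lambda>(a,b,c,d). (a,b,c,d,min (m2+a-b) (M-b-c-d),0)"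
         and f'="\<lambda>(a,b,c,d,e,f). (a,b,c,d)"]])
       (use assms in \<open>auto simp: S_set_def S4_set_def M_def min_def split: if_splits\<close>)
  show ?thesis using c1 cA cB cC by simp
qed


lemma part2:
  fixes m1 m2 n1 :: int
  assumes "0 \<le> m2" "0 \<le> m1"
  shows "card (S4_set m1 m2 n1) =
           (card (R2_set (m1 + 1) (m2 - 1) (n1 - 1)))
         + (card (Q1_set (m1 - 1) m2 (n1 - 1)) + card (Q2_set (m1 - 1) m2 (n1 - 1)))
         + (card (U1_set m1 m2 n1) + card (U2_set m1 m2 n1))"
proof -
  let ?S = "S4_set m1 m2 n1"
  let ?pb = "\<lambda>(a::int,b::int,c::int,d::int). b = 0"
  let ?pa = "\<lambda>(a::int,b::int,c::int,d::int). 1 \<le> a"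
  let ?pd = "\<lambda>(a::int,b::int,c::int,d::int). d = 0"
  let ?X = "{x\<in>?S. ?pb x}"
  let ?Y = "{x\<in>?S. \<not> ?pb x}"
  let ?Z = "{x\<in>?Y. ?pd x}"
  have fX: "finite ?X" and fY: "finite ?Y" and fZ: "finite ?Z"
    using fin_S4[of m1 m2 n1] by auto
  have c1: "card ?S = card {x\<in>?X. ?pa x} + card {x\<in>?X. \<not> ?pa x}
     + (card {x\<in>?Z. ?pa x} + card {x\<in>?Z. \<not> ?pa x}) + card {x\<in>?Y. \<not> ?pd x}"
    using split_card[OF fin_S4[of m1 m2 n1], where P="?pb"]
      split_card[OF fX, where P="?pa"] split_card[OF fY, where P="?pd"]
      split_card[OF fZ, where P="?pa"]
    by simp
  have q1: "card (Q1_set (m1 - 1) m2 (n1 - 1)) = card {x\<in>?X. ?pa x}"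
    by (rule bij_betw_same_card[OF bij_betw_byWitness[where f="\<lambda>(a,c,d). (a+1,0,c,d)"
         and f'="\<lambda>(a,b,c,d). (a-1,c,d)"]])
       (use assms in \<open>auto simp: S4_set_def Q1_set_def\<close>)
  have u1: "card (U1_set m1 m2 n1) = card {x\<in>?X. \<not> ?pa x}"
    by (rule bij_betw_same_card[OF bij_betw_byWitness[where f="\<lambda>(c,d). (0,0,c,d)"
         and f'="\<lambda>(a,b,c,d). (c,d)"]])
       (use assms in \<open>auto simp: S4_set_def U1_set_def\<close>)
  have q2: "card (Q2_set (m1 - 1) m2 (n1 - 1)) = card {x\<in>?Z. ?pa x}"
    by (rule bij_betw_same_card[OF bij_betw_byWitness[where f="\<lambda>(a,b,c). (a+1,b+1,c,0)"
         and f'="\<lambda>(a,b,c,d). (a-1,b-1,c)"]])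
       (use assms in \<open>auto simp: S4_set_def Q2_set_def\<close>)
  have u2: "card (U2_set m1 m2 n1) = card {x\<in>?Z. \<not> ?pa x}"
    by (rule bij_betw_same_card[OF bij_betw_byWitness[where f="\<lambda>(b,c). (0,b+1,c,0)"
         and f'="\<lambda>(a,b,c,d). (b-1,c)"]])
       (use assms in \<open>auto simp: S4_set_def U2_set_def\<close>)
  have r2: "card (R2_set (m1 + 1) (m2 - 1) (n1 - 1)) = card {x\<in>?Y. \<not> ?pd x}"
    by (rule bij_betw_same_card[OF bij_betw_byWitness[where f="\<lambda>(a,b,c,d). (a,b+1,c,d+1)"
         and f'="\<lambda>(a,b,c,d). (a,b-1,c,d-1)"]])
       (use assms in \<open>auto simp: S4_set_def R2_set_def\<close>)
  show ?thesis using c1 q1 u1 q2 u2 r2 by simp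
qed

theorem lemma6p5:
  fixes m1 m2 n1 :: int
  assumes "0 \<le> m1" and "0 \<le> m2" and "0 \<le> n1"
  shows "card (S_set m1 m2 n1) =
           card (S_set (m1 - 1) m2 (n1 - 1))
         + (card (R1_set (m1 + 1) (m2 - 1) (n1 - 1)) + card (R2_set (m1 + 1) (m2 - 1) (n1 - 1)))
         + (card (Q1_set (m1 - 1) m2 (n1 - 1)) + card (Q2_set (m1 - 1) m2 (n1 - 1)))
         + (card (U1_set m1 m2 n1) + card (U2_set m1 m2 n1))"
  using part1[OF assms(2,1)] part2[OF assms(2,1)] by simp

end
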